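(* Let $\mathcal{Q}\subseteq\mathbb{R}^n$ and consider the robotic system $\mathbf{D}(\mathbf{q})\ddot{\mathbf{q}}+\mathbf{C}(\mathbf{q},\dot{\mathbf{q}})\dot{\mathbf{q}}+\mathbf{G}(\mathbf{q})=\mathbf{B}\mathbf{u}$, $\mathbf{u}\in\mathbb{R}^m$. Let $h_0:\mathcal{Q}\to\mathbb{R}$ and $\mathbf{k}_0:\mathcal{Q}\to\mathbb{R}^n$ be continuously differentiable, $\mu>0$, and $$h(\mathbf{q},\dot{\mathbf{q}})=h_0(\mathbf{q})-\frac{1}{2\mu}(\dot{\mathbf{q}}-\mathbf{k}_0(\mathbf{q}))^\top\mathbf{D}(\mathbf{q})(\dot{\mathbf{q}}-\mathbf{k}_0(\mathbf{q})),\qquad \mathcal{C}=\{(\mathbf{q},\dot{\mathbf{q}})\in T\mathcal{Q}:h(\mathbf{q},\dot{\mathbf{q}})\ge0\}.$$ If $h$ is an energy-based control barrier function for the robotic system on $\mathcal{C}$ (with extended class $\mathcal{K}_\infty$ function $\alpha$), then any locally Lipschitz controller $\mathbf{k}:T\mathcal{Q}\to\mathbb{R}^m$ satisfying, for all $(\mathbf{q},\dot{\mathbf{q}})\in T\mathcal{Q}$, $$\tfrac{1}{\mu}(\dot{\mathbf{q}}-\mathbf{k}_0(\mathbf{q}))^\top\Big[\mathbf{D}(\mathbf{q})\tfrac{\partial\mathbf{k}_0}{\partial\mathbf{q}}(\mathbf{q})\dot{\mathbf{q}}+\mathbf{C}(\mathbf{q},\dot{\mathbf{q}})\mathbf{k}_0(\mathbf{q})+\mathbf{G}(\mathbf{q})-\mathbf{B}\mathbf{k}(\mathbf{q},\dot{\mathbf{q}})\Big]+\nabla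 h_0(\mathbf{q})\cdot\dot{\mathbf{q}}\ge-\alpha(h(\mathbf{q},\dot{\mathbf{q}}))$$ renders $\mathcal{C}$ forward invariant for the closed-loop system obtained with $\mathbf{u}=\mathbf{k}(\mathbf{q},\dot{\mathbf{q}})$.
   Context: $\mathbf{D}(\mathbf{q})$ is the positive definite (continuously differentiable) inertia matrix, $\mathbf{C}$ the Coriolis matrix, $\mathbf{G}$ the gravity term, $\mathbf{B}\in\mathbb{R}^{n\times m}$ the actuation matrix; the inertia and Coriolis matrices satisfy the skew-symmetry property $\mathbf{v}^\top(\dot{\mathbf{D}}(\mathbf{q},\dot{\mathbf{q}})-2\mathbf{C}(\mathbf{q},\dot{\mathbf{q}}))\mathbf{v}=0$ for all $(\mathbf{q},\dot{\mathbf{q}})$ and $\mathbf{v}\in\mathbb{R}^n$. An extended class $\mathcal{K}_\infty$ function is a continuous strictly increasing $\alpha:\mathbb{R}\to\mathbb{R}$ with $\alpha(0)=0$ and $\alpha(s)\to\pm\infty$ as $s\to\pm\infty$. $h$ is an energy-based CBF on $\mathcal{C}$ if there is such an $\alpha$ with, for all $(\mathbf{q},\dot{\mathbf{q}})$, $\sup_{\mathbf{u}\in\mathbb{R}^m}\{\tfrac{1}{\mu}(\dot{\mathbf{q}}-\mathbf{k}_0)^\top[\mathbf{D}\tfrac{\partial\mathbf{k}_0}{\partial\mathbf{q}}\dot{\mathbf{q}}+\mathbf{C}\mathbf{k}_0+\mathbf{G}-\mathbf{B}\mathbf{u}]+\nabla h_0\cdot\dot{\mathbf{q}}\}>-\alpha(h)$.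 A set is forward invariant if every closed-loop trajectory starting in it remains in it on its whole maximal interval of existence. *)

theory Defs
  imports "HOL-Analysis.Analysis"
begin

definition ext_class_Kinf :: "(real \<Rightarrow> real) \<Rightarrow> bool" where
  "ext_class_Kinf \<alpha> \<longleftrightarrow> continuous_on UNIV \<alpha> \<and> strict_mono \<alpha> \<and> \<alpha> 0 = 0 \<and>
     filterlim \<alpha> at_top at_top \<and> filterlim \<alpha> at_bot at_bot"

definition pos_def_mat :: "real^'n^'n \<Rightarrow> bool" where
  "pos_def_mat A \<longleftrightarrow> transpose A = A \<and> (\<forall>v. v \<noteq> 0 \<longrightarrow> v \<bullet> (A *v v) > 0)"

definition locally_lipschitz_on :: "'a::metric_space set \<Rightarrow> ('a \<Rightarrow> 'b::metric_space) \<Rightarrow> bool" where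
  "locally_lipschitz_on S f \<longleftrightarrow> (\<forall>x\<in>S. \<exists>e>0. \<exists>L. L-lipschitz_on (cball x e \<inter> S) f)"

definition energy_h ::
  "(real^'n \<Rightarrow> real) \<Rightarrow> (real^'n \<Rightarrow> real^'n) \<Rightarrow> (real^'n \<Rightarrow> real^'n^'n) \<Rightarrow> real
    \<Rightarrow> real^'n \<Rightarrow> real^'n \<Rightarrow> real" where
  "energy_h h0 k0 D \<mu> q qd = h0 q - 1 / (2 * \<mu>) * ((qd - k0 q) \<bullet> (D q *v (qd - k0 q)))"

definition cbf_expr ::
  "(real^'n \<Rightarrow> real^'n) \<Rightarrow> (real^'n \<Rightarrow> real^'n) \<Rightarrow> (real^'n \<Rightarrow> real^'n^'n)
   \<Rightarrow> (real^'n \<Rightarrow> real^'n^'n) \<Rightarrow> (real^'n \<Rightarrow> real^'n \<Rightarrow> real^'n^'n) \<Rightarrow> (real^'n \<Rightarrow> real^'n)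
   \<Rightarrow> real^'m^'n \<Rightarrow> real \<Rightarrow> real^'n \<Rightarrow> real^'n \<Rightarrow> real^'m \<Rightarrow> real" where
  "cbf_expr gh0 k0 Jk0 D C G B \<mu> q qd u =
     (1 / \<mu>) * ((qd - k0 q) \<bullet> (D q *v (Jk0 q *v qd) + C q qd *v k0 q + G q - B *v u))
     + gh0 q \<bullet> qd"

definition energy_cbf ::
  "(real^'n) set \<Rightarrow> (real^'n \<Rightarrow> real) \<Rightarrow> (real^'n \<Rightarrow> real^'n) \<Rightarrow> (real^'n \<Rightarrow> real^'n)
   \<Rightarrow> (real^'n \<Rightarrow> real^'n^'n) \<Rightarrow> (real^'n \<Rightarrow> real^'n^'n) \<Rightarrow> (real^'n \<Rightarrow> real^'n \<Rightarrow> real^'n^'n)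
   \<Rightarrow> (real^'n \<Rightarrow> real^'n) \<Rightarrow> real^'m^'n \<Rightarrow> real \<Rightarrow> (real \<Rightarrow> real) \<Rightarrow> bool" where
  "energy_cbf Q h0 gh0 k0 Jk0 D C G B \<mu> \<alpha> \<longleftrightarrow> ext_class_Kinf \<alpha> \<and>
     (\<forall>q\<in>Q. \<forall>qd. (SUP u. ereal (cbf_expr gh0 k0 Jk0 D C G B \<mu> q qd u))
                    > ereal (- \<alpha> (energy_h h0 k0 D \<mu> q qd)))"

definition closed_loop_solution ::
  "(real^'n) set \<Rightarrow> (real^'n \<Rightarrow> real^'n^'n) \<Rightarrow> (real^'n \<Rightarrow> real^'n \<Rightarrow> real^'n^'n) \<Rightarrow> (real^'n \<Rightarrow> real^'n)
   \<Rightarrow> real^'m^'n \<Rightarrow> ((real^'n) \<times> (real^'n) \<Rightarrow> real^'m) \<Rightarrow> real set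
   \<Rightarrow> (real \<Rightarrow> real^'n) \<Rightarrow> (real \<Rightarrow> real^'n) \<Rightarrow> bool" where
  "closed_loop_solution Q D C G B k I q qd \<longleftrightarrow> is_interval I \<and>
     (\<forall>t\<in>I. q t \<in> Q \<and> (q has_vector_derivative qd t) (at t within I) \<and>
        (\<exists>a. (qd has_vector_derivative a) (at t within I) \<and>
             D (q t) *v a + C (q t) (qd t) *v qd t + G (q t) = B *v k (q t, qd t)))"

definition closed_loop_forward_invariant ::
  "(real^'n) set \<Rightarrow> (real^'n \<Rightarrow> real^'n^'n) \<Rightarrow> (real^'n \<Rightarrow> real^'n \<Rightarrow> real^'n^'n) \<Rightarrow> (real^'n \<Rightarrow> real^'n)
   \<Rightarrow> real^'m^'n \<Rightarrow> ((real^'n) \<times> (real^'n) \<Rightarrow> real^'m) \<Rightarrow> ((real^'n) \<times> (real^'n)) set \<Rightarrow> bool" where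
  "closed_loop_forward_invariant Q D C G B k S \<longleftrightarrow>
     (\<forall>I q qd t0 t. closed_loop_solution Q D C G B k I q qd \<and> t0 \<in> I \<and> (q t0, qd t0) \<in> S
        \<and> t \<in> I \<and> t0 \<le> t \<longrightarrow> (q t, qd t) \<in> S)"

end

theory Submission imports Defs begin

lemma bb_mv: "bounded_bilinear (\<lambda>(A::real^'n^'m) (x::real^'n). A *v x)"
  unfolding bilinear_conv_bounded_bilinear[symmetric] bilinear_def
  by (auto simp: linear_iff algebra_simps matrix_vector_mult_scaleR scaleR_matrix_vector_assoc)

lemma sym_inner:
  fixes M :: "real^'n^'n"
  assumes "transpose M = M"
  shows "x \<bullet> (M *v y) = y \<bullet> (M *v x)"
proof -
  have "x \<bullet> (M *v y) = (x v* M) \<bullet> y" by (simp add: dot_lmul_matrix)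
  also have "x v* M = M *v x" by (metis assms vector_transpose_matrix)
  finally show ?thesis by (simp add: inner_commute)
qed

lemma alg:
  fixes M dM Cm :: "real^'n^'n" and B :: "real^'m^'n"
  assumes sym: "transpose M = M"
    and sk: "\<forall>v. v \<bullet> ((dM - 2 *\<^sub>R Cm) *v v) = 0"
    and eq: "M *v a + Cm *v qd + G = B *v u"
    and mu: "\<mu> > 0"
  shows "gh \<bullet> qd - 1 / (2 * \<mu>) * ((qd - k) \<bullet> (M *v (a - J *v qd) + dM *v (qd - k)) + (a - J *v qd) \<bullet> (M *v (qd - k)))
    = (1 / \<mu>) * ((qd - k) \<bullet> (M *v (J *v qd) + Cm *v k + G - B *v u)) + gh \<bullet> qd"
proof -
  define e where "e = qd - k"
  have 1: "(a - J *v qd) \<bullet> (M *v e) = e \<bullet> (M *v (a - J *v qd))" using sym_inner[OF sym] by blast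
  have 2: "e \<bullet> (dM *v e) = 2 * (e \<bullet> (Cm *v e))"
    using sk[rule_format, of e] by (simp add: algebra_simps inner_diff_right scaleR_matrix_vector_assoc[symmetric])
  have 3: "M *v a = B *v u - Cm *v qd - G" using eq by (simp add: algebra_simps)
  have 4: "Cm *v e = Cm *v qd - Cm *v k" unfolding e_def by (simp add: algebra_simps)
  have "(qd - k) \<bullet> (M *v (a - J *v qd) + dM *v (qd - k)) + (a - J *v qd) \<bullet> (M *v (qd - k))
     = 2 * (e \<bullet> (M *v (a - J *v qd))) + 2 * (e \<bullet> (Cm *v e))"
    using 1 2 unfolding e_def[symmetric] by (simp add: inner_add_right)
  also have "\<dots> = -2 * (e \<bullet> (M *v (J *v qd) + Cm *v k + G - B *v u))"
    by (simp add: 3 4 matrix_vector_mult_diff_distrib inner_diff_right inner_add_right algebra_simps)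
  finally show ?thesis using mu unfolding e_def by (simp add: field_simps)
qed

lemma traj_deriv:
  fixes q qd :: "real \<Rightarrow> real^'n" and D :: "real^'n \<Rightarrow> real^'n^'n"
    and dD :: "real^'n \<Rightarrow> real^'n \<Rightarrow> real^'n^'n"
  assumes QI: "q ` I \<subseteq> Q" and tI: "t \<in> I" and qt: "q t \<in> Q"
    and dq: "(q has_vector_derivative qd t) (at t within I)"
    and dqd: "(qd has_vector_derivative a) (at t within I)"
    and D_deriv: "\<forall>q\<in>Q. (D has_derivative dD q) (at q within Q)"
    and h0_deriv: "\<forall>q\<in>Q. (h0 has_derivative (\<lambda>v. gh0 q \<bullet> v)) (at q within Q)"
    and k0_deriv: "\<forall>q\<in>Q. (k0 has_derivative (\<lambda>v. Jk0 q *v v)) (at q within Q)"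
  shows "((\<lambda>s. energy_h h0 k0 D \<mu> (q s) (qd s)) has_real_derivative
     (gh0 (q t) \<bullet> qd t - 1 / (2 * \<mu>) * ((qd t - k0 (q t)) \<bullet> (D (q t) *v (a - Jk0 (q t) *v qd t) + dD (q t) (qd t) *v (qd t - k0 (q t)))
        + (a - Jk0 (q t) *v qd t) \<bullet> (D (q t) *v (qd t - k0 (q t)))))) (at t within I)"
proof -
  have dk0: "((k0 \<circ> q) has_vector_derivative Jk0 (q t) *v qd t) (at t within I)"
    using vector_derivative_diff_chain_within[OF dq, of k0 "\<lambda>v. Jk0 (q t) *v v"]
      has_derivative_subset[OF k0_deriv[rule_format, OF qt] QI] by simp
  have dDq: "((D \<circ> q) has_vector_derivative dD (q t) (qd t)) (at t within I)"
    using vector_derivative_diff_chain_within[OF dq, of D "dD (q t)"]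
      has_derivative_subset[OF D_deriv[rule_format, OF qt] QI] by simp
  have dh0: "((h0 \<circ> q) has_vector_derivative gh0 (q t) \<bullet> qd t) (at t within I)"
    using vector_derivative_diff_chain_within[OF dq, of h0 "\<lambda>v. gh0 (q t) \<bullet> v"]
      has_derivative_subset[OF h0_deriv[rule_format, OF qt] QI] by simp
  have de: "((\<lambda>s. qd s - k0 (q s)) has_vector_derivative a - Jk0 (q t) *v qd t) (at t within I)"
    using has_vector_derivative_diff[OF dqd dk0] by (simp add: o_def)
  have dw: "((\<lambda>s. D (q s) *v (qd s - k0 (q s))) has_vector_derivative
      D (q t) *v (a - Jk0 (q t) *v qd t) + dD (q t) (qd t) *v (qd t - k0 (q t))) (at t within I)"
    using bounded_bilinear.has_vector_derivative[OF bb_mv dDq de] by (simp add: o_def)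
  have dg: "((\<lambda>s. (qd s - k0 (q s)) \<bullet> (D (q s) *v (qd s - k0 (q s)))) has_vector_derivative
      (qd t - k0 (q t)) \<bullet> (D (q t) *v (a - Jk0 (q t) *v qd t) + dD (q t) (qd t) *v (qd t - k0 (q t)))
        + (a - Jk0 (q t) *v qd t) \<bullet> (D (q t) *v (qd t - k0 (q t)))) (at t within I)"
    using bounded_bilinear.has_vector_derivative[OF bounded_bilinear_inner de dw] by simp
  have dh0': "((\<lambda>s. h0 (q s)) has_real_derivative gh0 (q t) \<bullet> qd t) (at t within I)"
    using dh0 by (simp add: has_real_derivative_iff_has_vector_derivative o_def)
  have dg': "((\<lambda>s. (qd s - k0 (q s)) \<bullet> (D (q s) *v (qd s - k0 (q s)))) has_real_derivative
      (qd t - k0 (q t)) \<bullet> (D (q t) *v (a - Jk0 (q t) *v qd t) + dD (q t) (qd t) *v (qd t - k0 (q t)))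
        + (a - Jk0 (q t) *v qd t) \<bullet> (D (q t) *v (qd t - k0 (q t)))) (at t within I)"
    using dg by (simp add: has_real_derivative_iff_has_vector_derivative)
  show ?thesis unfolding energy_h_def
    by (intro DERIV_diff dh0' DERIV_cmult dg')
qed

theorem theorem9:
  fixes Q :: "(real^'n) set"
    and D :: "real^'n \<Rightarrow> real^'n^'n" and dD :: "real^'n \<Rightarrow> real^'n \<Rightarrow> real^'n^'n"
    and C :: "real^'n \<Rightarrow> real^'n \<Rightarrow> real^'n^'n" and G :: "real^'n \<Rightarrow> real^'n"
    and B :: "real^'m^'n"
    and h0 :: "real^'n \<Rightarrow> real" and gh0 :: "real^'n \<Rightarrow> real^'n"
    and k0 :: "real^'n \<Rightarrow> real^'n" and Jk0 :: "real^'n \<Rightarrow> real^'n^'n"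
    and \<mu> :: real and \<alpha> :: "real \<Rightarrow> real"
    and k :: "(real^'n) \<times> (real^'n) \<Rightarrow> real^'m"
  assumes D_pd: "\<forall>q\<in>Q. pos_def_mat (D q)"
    and D_deriv: "\<forall>q\<in>Q. (D has_derivative dD q) (at q within Q)"
    and D_C1: "\<forall>v. continuous_on Q (\<lambda>q. dD q v)"
    and skew: "\<forall>q\<in>Q. \<forall>qd v. v \<bullet> ((dD q qd - 2 *\<^sub>R C q qd) *v v) = 0"
    and h0_deriv: "\<forall>q\<in>Q. (h0 has_derivative (\<lambda>v. gh0 q \<bullet> v)) (at q within Q)"
    and h0_C1: "continuous_on Q gh0"
    and k0_deriv: "\<forall>q\<in>Q. (k0 has_derivative (\<lambda>v. Jk0 q *v v)) (at q within Q)"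
    and k0_C1: "continuous_on Q Jk0"
    and mu_pos: "\<mu> > 0"
    and cbf: "energy_cbf Q h0 gh0 k0 Jk0 D C G B \<mu> \<alpha>"
    and k_lip: "locally_lipschitz_on (Q \<times> UNIV) k"
    and k_cond: "\<forall>q\<in>Q. \<forall>qd. cbf_expr gh0 k0 Jk0 D C G B \<mu> q qd (k (q, qd))
                         \<ge> - \<alpha> (energy_h h0 k0 D \<mu> q qd)"
  shows "closed_loop_forward_invariant Q D C G B k
           {(q, qd). q \<in> Q \<and> energy_h h0 k0 D \<mu> q qd \<ge> 0}"
proof -
  have sm: "strict_mono \<alpha>" and a0: "\<alpha> 0 = 0"
    using cbf unfolding energy_cbf_def ext_class_Kinf_def by auto
  show ?thesis unfolding closed_loop_forward_invariant_def
  proof (intro allI impI, elim conjE)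
    fix I q qd t0 t
    assume sol: "closed_loop_solution Q D C G B k I q qd" and t0I: "t0 \<in> I"
      and S0: "(q t0, qd t0) \<in> {(q, qd). q \<in> Q \<and> 0 \<le> energy_h h0 k0 D \<mu> q qd}"
      and tI: "t \<in> I" and le: "t0 \<le> t"
    define hh where "hh = (\<lambda>s. energy_h h0 k0 D \<mu> (q s) (qd s))"
    have ivl: "is_interval I" and QI: "q ` I \<subseteq> Q" using sol unfolding closed_loop_solution_def by auto
    have der: "\<exists>d. (hh has_real_derivative d) (at s within I) \<and> d \<ge> - \<alpha> (hh s)" if sI: "s \<in> I" for s
    proof -
      from sol sI obtain a where qs: "q s \<in> Q" and dq: "(q has_vector_derivative qd s) (at s within I)"
        and dqd: "(qd has_vector_derivative a) (at s within I)"
        and eq: "D (q s) *v a + C (q s) (qd s) *v qd s + G (q s) = B *v k (q s, qd s)"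
        unfolding closed_loop_solution_def by blast
      have "transpose (D (q s)) = D (q s)" using D_pd qs unfolding pos_def_mat_def by auto
      moreover have "\<forall>v. v \<bullet> ((dD (q s) (qd s) - 2 *\<^sub>R C (q s) (qd s)) *v v) = 0" using skew qs by auto
      ultimately have e1: "gh0 (q s) \<bullet> qd s - 1 / (2 * \<mu>) * ((qd s - k0 (q s)) \<bullet> (D (q s) *v (a - Jk0 (q s) *v qd s) + dD (q s) (qd s) *v (qd s - k0 (q s)))
        + (a - Jk0 (q s) *v qd s) \<bullet> (D (q s) *v (qd s - k0 (q s))))
        = cbf_expr gh0 k0 Jk0 D C G B \<mu> (q s) (qd s) (k (q s, qd s))"
        unfolding cbf_expr_def by (rule alg[OF _ _ eq mu_pos])
      moreover have "cbf_expr gh0 k0 Jk0 D C G B \<mu> (q s) (qd s) (k (q s, qd s)) \<ge> - \<alpha> (hh s)"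
        using k_cond qs unfolding hh_def by auto
      moreover have "(hh has_real_derivative cbf_expr gh0 k0 Jk0 D C G B \<mu> (q s) (qd s) (k (q s, qd s))) (at s within I)"
        unfolding hh_def by (rule traj_deriv[OF QI sI qs dq dqd D_deriv h0_deriv k0_deriv, of \<mu>, unfolded e1])
      ultimately show ?thesis by blast
    qed
    have sub: "{t0..t} \<subseteq> I" using ivl t0I tI unfolding is_interval_1 by (meson atLeastAtMost_iff subsetI)
    have cont: "continuous_on {t0..t} hh"
    proof (rule continuous_on_subset[OF _ sub])
      show "continuous_on I hh" unfolding continuous_on_eq_continuous_within
      proof
        fix x assume "x \<in> I"
        then obtain d where "(hh has_real_derivative d) (at x within I)" using der by blast
        then show "continuous (at x within I) hh" by (rule DERIV_continuous)
      qed
    qed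
    have h0: "hh t0 \<ge> 0" using S0 unfolding hh_def by auto
    show "(q t, qd t) \<in> {(q, qd). q \<in> Q \<and> 0 \<le> energy_h h0 k0 D \<mu> q qd}"
    proof (rule ccontr)
      assume "\<not> ?thesis"
      moreover have "q t \<in> Q" using QI tI by auto
      ultimately have ht: "hh t < 0" unfolding hh_def by auto
      define S where "S = {t0..t} \<inter> hh -` {0..}"
      have clS: "closed S" unfolding S_def by (rule continuous_closed_preimage[OF cont]) auto
      have t0S: "t0 \<in> S" using h0 le unfolding S_def by auto
      have bdd: "bdd_above S" unfolding S_def by (rule bdd_aboveI[of _ t]) auto
      define s where "s = Sup S"
      have sS: "s \<in> S" unfolding s_def using closed_contains_Sup[OF _ bdd clS] t0S by auto
      have hs: "hh s \<ge> 0" and s_le: "t0 \<le> s" "s \<le> t" using sS unfolding S_def by auto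
      have st: "s < t" proof -
        have "s \<noteq> t" using hs ht by auto
        then show ?thesis using s_le by linarith
      qed
      have neg: "hh x < 0" if "s < x" "x \<le> t" for x
      proof (rule ccontr)
        assume "\<not> hh x < 0"
        then have "x \<in> S" using that s_le unfolding S_def by auto
        then have "x \<le> s" unfolding s_def using bdd by (rule cSup_upper)
        then show False using that by auto
      qed
      have "hh s < hh t"
      proof (rule DERIV_pos_imp_increasing_open[OF st])
        fix x assume x: "s < x" "x < t"
        then have xI: "x \<in> I" using sub s_le by auto
        obtain d where d: "(hh has_real_derivative d) (at x within I)" and dge: "d \<ge> - \<alpha> (hh x)"
          using der[OF xI] by blast
        have "{s<..<t} \<subseteq> I" using sub s_le by auto
        then have "(hh has_real_derivative d) (at x within {s<..<t})" using d DERIV_subset by blast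
        then have "(hh has_real_derivative d) (at x)" using at_within_open[of x "{s<..<t}"] x by simp
        moreover have "\<alpha> (hh x) < 0" using strict_monoD[OF sm, of "hh x" 0] neg[of x] x a0 by auto
        ultimately show "\<exists>y. (hh has_real_derivative y) (at x) \<and> 0 < y" using dge by auto
      next
        show "continuous_on {s..t} hh" by (rule continuous_on_subset[OF cont]) (use s_le in auto)
      qed
      then show False using hs ht by auto
    qed
  qed
qed

end
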